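(* Let $(H_n)_{n\ge0}$ be the monic Hermite polynomials ($H_0=1$, $H_{-1}=0$, $H_n=xH_{n-1}-\tfrac{n-1}{2}H_{n-2}$), with $H_n(x)=\sum_{i=0}^nb_{n,i}x^i$ (convention $b_{m,m}=1$, $b_{m,l}=0$ for $l>m$). For integers $n\ge k\ge1$ and $0\le t\le k-1$ let $E_{k,n,t}$ be the determinant of the $(k-t-1)\times(k-t-1)$ matrix with $(\rho,c)$ entry $b_{n-k+t+1+c,\;n-k+t+\rho}$ (with $E_{k,n,k-1}=1$). Then for integers $j\ge0$, $r\ge1$ with $j+r\le k$, $$E_{k,n,j+r-1}=\begin{cases}0,& k-j-r \text{ odd},\\[2pt] \dfrac{n!}{(n-k+j+r)!\,\left(\frac{k-j-r}{2}\right)!\,2^{k-j-r}},& k-j-r\text{ even}.\end{cases}$$ *)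

theory Defs
  imports "HOL-Computational_Algebra.Polynomial" "Jordan_Normal_Form.Determinant"
begin

fun hermite :: "nat \<Rightarrow> real poly" where
  "hermite 0 = 1"
| "hermite (Suc 0) = [:0, 1:]"
| "hermite (Suc (Suc m)) = [:0, 1:] * hermite (Suc m) - smult (real (Suc m) / 2) (hermite m)"

definition b :: "nat \<Rightarrow> nat \<Rightarrow> real" where
  "b m l = coeff (hermite m) l"

text \<open>E_(k,n,t): determinant of the (k-t-1)x(k-t-1) matrix with (rho,c) entry
  b_(n-k+t+1+c, n-k+t+rho), rho, c ranging over 1..k-t-1 (shifted to 0-based indices).\<close>
definition E :: "nat \<Rightarrow> nat \<Rightarrow> nat \<Rightarrow> real" where
  "E k n t = det (mat (k - t - 1) (k - t - 1)
      (\<lambda>(\<rho>, c). b (n - k + t + 1 + (c + 1)) (n - k + t + (\<rho> + 1))))"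

end

theory Submission
  imports Defs
begin

definition gi :: "int \<Rightarrow> real" where
  "gi z = (if z \<ge> 0 \<and> even z then (-1)^(nat z div 2) / (fact (nat z div 2) * 4^(nat z div 2)) else 0)"

lemma gi_rec: "real_of_int d * gi d = - gi (d - 2) / 2"
proof (cases "d \<ge> 2 \<and> even d")
  case True
  then obtain i' where i': "d = 2 * i'" by (auto elim: evenE)
  define i where "i = nat (i' - 1)"
  have i: "d = 2 * int i + 2" using i' True unfolding i_def by simp
  have "nat d div 2 = Suc i" using i by simp
  moreover have "nat (d-2) div 2 = i" using i by simp
  ultimately have g1: "gi d = - ((-1)^i / (fact i * 4^i)) / (4 * (real i + 1))"
     and g2: "gi (d - 2) = (-1)^i / (fact i * 4^i)"
    using i True unfolding gi_def by (auto simp: field_simps)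
  define B where "B = (-1::real)^i / (fact i * 4^i)"
  have dr: "real_of_int d = 2 * (real i + 1)" using i by simp
  have "real_of_int d * gi d = 2 * (real i + 1) * (- B / (4 * (real i + 1)))"
    unfolding dr g1 B_def by simp
  also have "\<dots> = - B / 2" by (simp add: field_simps)
  finally show ?thesis unfolding g2 B_def .
next
  case False
  then have "d < 2 \<or> odd d" by auto
  then show ?thesis
  proof
    assume "d < 2"
    then have "d = 0 \<or> d = 1 \<or> d < 0" by auto
    then show ?thesis unfolding gi_def by auto
  next
    assume "odd d" then show ?thesis unfolding gi_def by auto
  qed
qed

lemma aux_field:
  fixes F Q G m q :: real
  assumes "Q \<noteq> 0" "1 + q \<noteq> 0"
  shows "(1+m)*F/Q*G - (1+m)/2*(F/((1+q)*Q) * (-2*(m+1-q)*G)) = (2+m)*(1+m)*F/((1+q)*Q)*G"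
proof -
  have "(1+m)*F/Q*G = (1+m)*F*(1+q)/((1+q)*Q)*G" using assms by simp
  then have "(1+m)*F/Q*G - (1+m)/2*(F/((1+q)*Q) * (-2*(m+1-q)*G)) = ((1+m)*F*(1+q) + (1+m)*F*(m+1-q))/((1+q)*Q)*G"
    by (simp add: diff_divide_distrib add_divide_distrib algebra_simps)
  also have "(1+m)*F*(1+q) + (1+m)*F*(m+1-q) = (2+m)*(1+m)*F" by (simp add: algebra_simps)
  finally show ?thesis .
qed


lemma b_closed: "coeff (hermite p) q = fact p / fact q * gi (int p - int q)"
proof (induction p arbitrary: q rule: hermite.induct)
  case 1
  show ?case
  proof (cases q)
    case 0 then show ?thesis by (simp add: gi_def)
  next
    case (Suc q') then show ?thesis by (simp add: gi_def)
  qed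
next
  case 2
  consider "q = 0" | "q = 1" | "q \<ge> 2" by linarith
  then show ?case
  proof cases
    case 1 then show ?thesis by (simp add: gi_def)
  next
    case 2 then show ?thesis by (simp add: gi_def)
  next
    case 3
    then have "coeff (hermite (Suc 0)) q = 0" by (simp add: coeff_eq_0)
    moreover have "gi (int (Suc 0) - int q) = 0" using 3 by (simp add: gi_def)
    ultimately show ?thesis by simp
  qed
next
  case (3 m)
  have pc: "[:0, 1:] * hermite (Suc m) = pCons 0 (hermite (Suc m))" by simp
  show ?case
  proof (cases q)
    case 0
    have "coeff (hermite (Suc (Suc m))) q = - (real (Suc m) / 2) * coeff (hermite m) 0"
      using 0 pc by simp
    also have "\<dots> = - (real (Suc m) / 2) * fact m * gi (int m)" using 3(2)[of 0] by simp
    also have "\<dots> = fact (Suc (Suc m)) * gi (int m + 2)"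
    proof -
      have "gi (int m) = - 2 * real (m+2) * gi (int m + 2)" using gi_rec[of "int m + 2"] by (simp add: field_simps)
      then show ?thesis by (simp only:) (simp add: field_simps)
    qed
    finally show ?thesis using 0 by (simp add: add.commute)
  next
    case (Suc q')
    have "coeff (hermite (Suc (Suc m))) q = coeff (hermite (Suc m)) q' - (real (Suc m) / 2) * coeff (hermite m) q"
      using Suc pc by simp
    also have "\<dots> = fact (Suc m) / fact q' * gi (int m + 1 - int q') - (real (Suc m) / 2) * (fact m / fact q * gi (int m - int q))"
      using 3(2)[of q] 3(1)[of q'] by (simp add: add.commute)
    also have "\<dots> = fact (Suc (Suc m)) / fact q * gi (int m + 1 - int q')"
    proof -
      have r: "real_of_int (int m + 1 - int q') * gi (int m + 1 - int q') = - gi (int m - int q) / 2"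
        using gi_rec[of "int m + 1 - int q'"] Suc by (simp add: algebra_simps)
      have fq: "fact q = real (Suc q') * fact q'" using Suc by simp
      have ff: "fact (Suc (Suc m)) = real (Suc (Suc m)) * real (Suc m) * (fact m :: real)" by simp
      have ff1: "fact (Suc m) = real (Suc m) * (fact m :: real)" by simp
      have r2: "gi (int m - int q) = -2 * real_of_int (int m + 1 - int q') * gi (int m + 1 - int q')"
        using r by (simp add: field_simps)
      have nz: "(1 + real q') \<noteq> 0" "(fact q' :: real) \<noteq> 0" by auto
      have fq2: "fact q = (1 + real q') * fact q'" using fq by simp
      have ff2: "fact (Suc (Suc m)) = (2 + real m) * (1 + real m) * (fact m :: real)" by simp
      have ff3: "fact (Suc m) = (1 + real m) * (fact m :: real)" by simp
      have r3: "gi (int m - int q) = -2 * (real m + 1 - real q') * gi (int m + 1 - int q')" using r2 by simp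
      show ?thesis unfolding fq2 ff2 ff3 r3 using aux_field[OF nz(2) nz(1), of "real m" "fact m" "gi (int m + 1 - int q')"]
        by simp
    qed
    also have "\<dots> = fact (Suc (Suc m)) / fact q * gi (int (Suc (Suc m)) - int q)"
    proof -
      have "int m + 1 - int q' = int (Suc (Suc m)) - int q" using Suc by simp
      then show ?thesis by (simp only:)
    qed
    finally show ?thesis .
  qed
qed


lemma det_scale:
  fixes x y :: "nat \<Rightarrow> real" and f :: "nat \<Rightarrow> nat \<Rightarrow> real"
  shows "det (mat n n (\<lambda>(i,j). x i * y j * f i j)) =
    prod x {0..<n} * prod y {0..<n} * det (mat n n (\<lambda>(i,j). f i j))"
proof -
  have c1: "mat n n (\<lambda>(i,j). x i * y j * f i j) \<in> carrier_mat n n" by simp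
  have c2: "mat n n (\<lambda>(i,j). f i j) \<in> carrier_mat n n" by simp
  have "det (mat n n (\<lambda>(i,j). x i * y j * f i j)) =
     (\<Sum>p\<in>{p. p permutes {0..<n}}. signof p * (\<Prod>i = 0..<n. x i * y (p i) * f i (p i)))"
    unfolding det_def'[OF c1]
  proof (rule sum.cong[OF refl])
    fix p assume "p \<in> {p. p permutes {0..<n}}"
    then have "\<And>i. i < n \<Longrightarrow> p i < n" using permutes_in_image by fastforce
    then show "signof p * (\<Prod>i = 0..<n. mat n n (\<lambda>(i,j). x i * y j * f i j) $$ (i, p i)) =
      signof p * (\<Prod>i = 0..<n. x i * y (p i) * f i (p i))"
      by (intro arg_cong[where f = "\<lambda>t. signof p * t"] prod.cong) auto
  qed
  also have "\<dots> = (\<Sum>p\<in>{p. p permutes {0..<n}}. prod x {0..<n} * prod y {0..<n} * (signof p * (\<Prod>i = 0..<n. f i (p i))))"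
  proof (rule sum.cong[OF refl])
    fix p assume "p \<in> {p. p permutes {0..<n}}"
    then have pp: "p permutes {0..<n}" by simp
    have "(\<Prod>i = 0..<n. y (p i)) = prod y {0..<n}"
      using prod.permute[OF pp, of y] by (simp add: comp_def)
    then show "signof p * (\<Prod>i = 0..<n. x i * y (p i) * f i (p i)) =
      prod x {0..<n} * prod y {0..<n} * (signof p * (\<Prod>i = 0..<n. f i (p i)))"
      by (simp add: prod.distrib)
  qed
  also have "\<dots> = prod x {0..<n} * prod y {0..<n} * (\<Sum>p\<in>{p. p permutes {0..<n}}. signof p * (\<Prod>i = 0..<n. f i (p i)))"
    by (simp add: sum_distrib_left)
  also have "(\<Sum>p\<in>{p. p permutes {0..<n}}. signof p * (\<Prod>i = 0..<n. f i (p i))) = det (mat n n (\<lambda>(i,j). f i j))"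
    unfolding det_def'[OF c2]
  proof (rule sum.cong[OF refl])
    fix p assume "p \<in> {p. p permutes {0..<n}}"
    then have "\<And>i. i < n \<Longrightarrow> p i < n" using permutes_in_image by fastforce
    then show "signof p * (\<Prod>i = 0..<n. f i (p i)) = signof p * (\<Prod>i = 0..<n. mat n n (\<lambda>(i,j). f i j) $$ (i, p i))"
      by (intro arg_cong[where f = "\<lambda>t. signof p * t"] prod.cong) auto
  qed
  finally show ?thesis .
qed

definition ui :: "int \<Rightarrow> real" where
  "ui z = (if z \<ge> 0 \<and> even z then 1 / (fact (nat z div 2) * 4^(nat z div 2)) else 0)"

lemma conv_even_term:
  assumes "i \<le> q"
  shows "gi (int (2*q) - int (2*i)) * ui (int (2*i)) = (-1)^(q-i) * of_nat (q choose i) / (fact q * 4^q)"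
proof -
  have a: "int (2*q) - int (2*i) = int (2*(q-i))" using assms by simp
  have g: "gi (int (2*(q-i))) = (-1)^(q-i) / (fact (q-i) * 4^(q-i))" unfolding gi_def nat_int by simp
  have u: "ui (int (2*i)) = 1 / (fact i * 4^i)" unfolding ui_def nat_int by simp
  have c: "(of_nat (q choose i) :: real) = fact q / (fact i * fact (q - i))" by (rule binomial_fact[OF assms])
  have p4: "(4::real)^q = 4^(q-i) * 4^i" using assms by (simp add: power_add[symmetric])
  show ?thesis unfolding a g u c p4 by (simp add: field_simps)
qed

lemma conv: "(\<Sum>j=0..p. gi (int p - int j) * ui (int j)) = (if p = 0 then 1 else 0)"
proof (cases "even p")
  case False
  have "gi (int p - int j) * ui (int j) = 0" for j
    using False unfolding gi_def ui_def by auto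
  then have "(\<Sum>j=0..p. gi (int p - int j) * ui (int j)) = 0" by (intro sum.neutral) auto
  moreover have "p \<noteq> 0" using False by (cases p) auto
  ultimately show ?thesis by simp
next
  case True
  then obtain q where q: "p = 2*q" by auto
  let ?f = "\<lambda>j. gi (int p - int j) * ui (int j)"
  have "(\<Sum>j=0..p. ?f j) = sum ?f ((\<lambda>i. 2*i) ` {0..q})"
  proof (rule sum.mono_neutral_right)
    show "finite {0..p}" by simp
    show "(\<lambda>i. 2*i) ` {0..q} \<subseteq> {0..p}" using q by auto
    show "\<forall>j\<in>{0..p} - (\<lambda>i. 2*i) ` {0..q}. ?f j = 0"
    proof
      fix j assume j: "j \<in> {0..p} - (\<lambda>i. 2*i) ` {0..q}"
      have "odd j"
      proof
        assume "even j"
        then obtain i where "j = 2*i" by auto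
        with j q show False by auto
      qed
      then show "?f j = 0" unfolding ui_def by auto
    qed
  qed
  also have "\<dots> = (\<Sum>i=0..q. ?f (2*i))" by (subst sum.reindex) (auto simp: inj_on_def)
  also have "\<dots> = (\<Sum>i=0..q. (-1)^(q-i) * of_nat (q choose i) / (fact q * 4^q))"
    using conv_even_term q by (intro sum.cong) auto
  also have "\<dots> = (-1)^q / (fact q * 4^q) * (\<Sum>i\<le>q. (-1)^i * of_nat (q choose i))"
  proof -
    have "(-1::real)^(q-i) = (-1)^q * (-1)^i" if "i \<le> q" for i
    proof -
      have e: "(-1::real)^q = (-1)^(q-i) * (-1)^i" using that by (metis le_add_diff_inverse2 power_add)
      have s: "(-1::real)^i * (-1)^i = 1" by (simp add: power_mult_distrib[symmetric])
      show ?thesis unfolding e mult.assoc s by simp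
    qed
    then show ?thesis by (simp add: sum_distrib_left atLeast0AtMost field_simps)
  qed
  also have "\<dots> = (if p = 0 then 1 else 0)"
  proof (cases "q = 0")
    case True then show ?thesis using q by simp
  next
    case False then show ?thesis using q choose_alternating_sum[of q] by simp
  qed
  finally show ?thesis .
qed


lemma conv_gen:
  assumes "z \<le> int N"
  shows "(\<Sum>j=0..N. gi (z - int j) * ui (int j)) = (if z = 0 then 1 else 0)"
proof (cases "z < 0")
  case True
  have "gi (z - int j) = 0" for j using True unfolding gi_def by auto
  then show ?thesis using True by simp
next
  case False
  define s where "s = nat z"
  have zs: "z = int s" using False s_def by simp
  have "(\<Sum>j=0..N. gi (z - int j) * ui (int j)) = (\<Sum>j=0..s. gi (z - int j) * ui (int j))"
  proof (rule sum.mono_neutral_right)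
    show "finite {0..N}" by simp
    show "{0..s} \<subseteq> {0..N}" using assms zs by auto
    show "\<forall>i\<in>{0..N} - {0..s}. gi (z - int i) * ui (int i) = 0"
      using zs unfolding gi_def by auto
  qed
  also have "\<dots> = (if s = 0 then 1 else 0)" using conv[of s] zs by simp
  finally show ?thesis using zs by simp
qed

lemma TU_entry:
  assumes "\<rho> < m" "c < m"
  shows "(\<Sum>k\<in>{0..<m}. gi (int k + 1 - int \<rho>) * ui (int c - int k)) =
    (if c + 1 = \<rho> then 1 else 0) - (if \<rho> = 0 then ui (int c + 1) else 0)"
proof -
  have "(\<Sum>k\<in>{0..<m}. gi (int k + 1 - int \<rho>) * ui (int c - int k)) =
        (\<Sum>k\<in>{0..c}. gi (int k + 1 - int \<rho>) * ui (int c - int k))"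
  proof (rule sum.mono_neutral_right)
    show "finite {0..<m}" by simp
    show "{0..c} \<subseteq> {0..<m}" using assms by auto
    show "\<forall>i\<in>{0..<m} - {0..c}. gi (int i + 1 - int \<rho>) * ui (int c - int i) = 0"
      unfolding ui_def by auto
  qed
  also have "\<dots> = (\<Sum>k\<in>{0..c}. gi (int (c + 0 - k) + 1 - int \<rho>) * ui (int c - int (c + 0 - k)))"
    by (rule sum.atLeastAtMost_rev)
  also have "\<dots> = (\<Sum>j\<in>{0..c}. gi ((int c + 1 - int \<rho>) - int j) * ui (int j))"
  proof (rule sum.cong[OF refl])
    fix k assume "k \<in> {0..c}"
    then have e1: "int (c + 0 - k) + 1 - int \<rho> = (int c + 1 - int \<rho>) - int k"
      and e2: "int c - int (c + 0 - k) = int k" by (auto simp: of_nat_diff)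
    show "gi (int (c + 0 - k) + 1 - int \<rho>) * ui (int c - int (c + 0 - k)) = gi ((int c + 1 - int \<rho>) - int k) * ui (int k)"
      unfolding e1 e2 ..
  qed
  also have "\<dots> = (if c + 1 = \<rho> then 1 else 0) - (if \<rho> = 0 then ui (int c + 1) else 0)"
  proof (cases "\<rho> = 0")
    case False
    then show ?thesis using conv_gen[of "int c + 1 - int \<rho>" c] by auto
  next
    case True
    have "(\<Sum>j\<in>{0..Suc c}. gi ((int c + 1) - int j) * ui (int j)) = 0"
      using conv_gen[of "int c + 1" "Suc c"] by simp
    then have "(\<Sum>j\<in>{0..c}. gi ((int c + 1) - int j) * ui (int j)) + gi 0 * ui (int c + 1) = 0"
      by (simp add: atLeast0_atMost_Suc add.commute)
    moreover have "gi 0 = 1" unfolding gi_def by simp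
    ultimately show ?thesis using True by simp
  qed
  finally show ?thesis .
qed

definition Tm :: "nat \<Rightarrow> real mat" where
  "Tm m = mat m m (\<lambda>(\<rho>, c). gi (int c + 1 - int \<rho>))"
definition Um :: "nat \<Rightarrow> real mat" where
  "Um m = mat m m (\<lambda>(i, j). ui (int j - int i))"
definition Cm :: "nat \<Rightarrow> real mat" where
  "Cm m = mat m m (\<lambda>(\<rho>, c). (if c + 1 = \<rho> then 1 else 0) - (if \<rho> = 0 then ui (int c + 1) else 0))"

lemma TU: "Tm m * Um m = Cm m"
proof (rule eq_matI)
  fix i j assume i: "i < dim_row (Cm m)" and j: "j < dim_col (Cm m)"
  then have im: "i < m" and jm: "j < m" by (auto simp: Cm_def)
  have "(Tm m * Um m) $$ (i, j) = row (Tm m) i \<bullet> col (Um m) j"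
    using im jm by (simp add: Tm_def Um_def)
  also have "\<dots> = (\<Sum>k\<in>{0..<m}. gi (int k + 1 - int i) * ui (int j - int k))"
    unfolding scalar_prod_def using im jm by (simp add: Tm_def Um_def)
  also have "\<dots> = Cm m $$ (i, j)" using TU_entry[OF im jm] im jm by (simp add: Cm_def)
  finally show "(Tm m * Um m) $$ (i, j) = Cm m $$ (i, j)" .
qed (auto simp: Tm_def Um_def Cm_def)

lemma det_Um: "det (Um m) = 1"
proof -
  have "upper_triangular (Um m)" unfolding upper_triangular_def Um_def ui_def by auto
  then have "det (Um m) = prod_list (diag_mat (Um m))"
    by (rule det_upper_triangular[of _ m]) (simp add: Um_def)
  also have "\<dots> = 1" unfolding prod_list_diag_prod by (simp add: Um_def ui_def)
  finally show ?thesis .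
qed

lemma det_Cm: "det (Cm m) = (-1)^m * ui (int m)"
proof (cases m)
  case 0
  then show ?thesis by (simp add: Cm_def ui_def)
next
  case (Suc m')
  have car: "Cm m \<in> carrier_mat m m" by (simp add: Cm_def)
  have um: "ui (int m) = ui (int m' + 1)" using Suc by (simp add: add.commute)
  have "det (Cm m) = (\<Sum>i<m. Cm m $$ (i, m') * cofactor (Cm m) i m')"
    by (rule laplace_expansion_column[OF car]) (simp add: Suc)
  also have "\<dots> = (\<Sum>i<m. (if i = 0 then - ui (int m' + 1) * cofactor (Cm m) 0 m' else 0))"
    by (intro sum.cong) (auto simp: Cm_def Suc)
  also have "\<dots> = - ui (int m' + 1) * cofactor (Cm m) 0 m'" using Suc by simp
  also have "mat_delete (Cm m) 0 m' = 1\<^sub>m m'"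
    by (rule eq_matI) (auto simp: mat_delete_def Cm_def Suc)
  then have "cofactor (Cm m) 0 m' = (-1)^m'" unfolding cofactor_def by simp
  finally show ?thesis using Suc um by simp
qed

lemma det_Tm: "det (Tm m) = (-1)^m * ui (int m)"
proof -
  have "det (Tm m * Um m) = det (Tm m) * det (Um m)"
    by (rule det_mult[of _ m]) (auto simp: Tm_def Um_def)
  then show ?thesis using TU det_Um det_Cm by simp
qed


lemma prod_fact_shift:
  "(\<Prod>c\<in>{0..<m}. fact (a + 2 + c) :: real) = fact (a + 1 + m) / fact (a + 1) * (\<Prod>c\<in>{0..<m}. fact (a + 1 + c))"
proof (induction m)
  case 0 then show ?case by simp
next
  case (Suc m)
  have "(\<Prod>c\<in>{0..<Suc m}. fact (a + 2 + c) :: real) = (\<Prod>c\<in>{0..<m}. fact (a + 2 + c)) * fact (a + 2 + m)" by simp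
  also have "\<dots> = fact (a + 1 + m) / fact (a + 1) * (\<Prod>c\<in>{0..<m}. fact (a + 1 + c)) * fact (a + 2 + m)" using Suc by simp
  also have "\<dots> = fact (a + 1 + Suc m) / fact (a + 1) * (\<Prod>c\<in>{0..<Suc m}. fact (a + 1 + c))"
    by (simp add: field_simps)
  finally show ?case .
qed

lemma E_closed:
  assumes "m = k - t - 1" and "a = n - k + t"
  shows "E k n t = fact (a + 1 + m) / fact (a + 1) * ((-1)^m * ui (int m))"
proof -
  define x where "x = (\<lambda>\<rho>. inverse (fact (a + 1 + \<rho>) :: real))"
  define y where "y = (\<lambda>c. fact (a + 2 + c) :: real)"
  have "E k n t = det (mat m m (\<lambda>(\<rho>, c). x \<rho> * y c * gi (int c + 1 - int \<rho>)))"
    unfolding E_def assms(1)[symmetric] assms(2)[symmetric]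
  proof (rule arg_cong[where f = det], rule eq_matI)
    fix i j assume "i < dim_row (mat m m (\<lambda>(\<rho>, c). x \<rho> * y c * gi (int c + 1 - int \<rho>)))"
      "j < dim_col (mat m m (\<lambda>(\<rho>, c). x \<rho> * y c * gi (int c + 1 - int \<rho>)))"
    then have ij: "i < m" "j < m" by auto
    have "int (a + 1 + (j + 1)) - int (a + (i + 1)) = int j + 1 - int i" by simp
    moreover have "a + 1 + (j + 1) = a + 2 + j" "a + (i + 1) = a + 1 + i" by simp_all
    ultimately show "mat m m (\<lambda>(\<rho>, c). b (a + 1 + (c + 1)) (a + (\<rho> + 1))) $$ (i, j) =
      mat m m (\<lambda>(\<rho>, c). x \<rho> * y c * gi (int c + 1 - int \<rho>)) $$ (i, j)"
      using ij unfolding b_def b_closed x_def y_def by (simp add: field_simps)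
  qed auto
  also have "\<dots> = prod x {0..<m} * prod y {0..<m} * det (Tm m)"
    unfolding det_scale Tm_def by simp
  also have "prod x {0..<m} * prod y {0..<m} = fact (a + 1 + m) / fact (a + 1)"
  proof -
    have "prod x {0..<m} = inverse (\<Prod>c\<in>{0..<m}. fact (a + 1 + c))"
      unfolding x_def using prod_inversef[of "\<lambda>c. fact (a + 1 + c) :: real" "{0..<m}"] by (simp only: comp_def)
    moreover have "(\<Prod>c\<in>{0..<m}. fact (a + 1 + c) :: real) \<noteq> 0" by simp
    ultimately show ?thesis unfolding y_def prod_fact_shift by simp
  qed
  finally show ?thesis using det_Tm by simp
qed


theorem lemma6:
  fixes n k j r :: nat
  assumes "1 \<le> k" and "k \<le> n" and "1 \<le> r" and "j + r \<le> k"
  shows "E k n (j + r - 1) =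
    (if odd (k - j - r) then 0
     else fact n / (fact (n - k + j + r) * fact ((k - j - r) div 2) * 2 ^ (k - j - r)))"
proof -
  define m where "m = k - j - r"
  define a where "a = n - k + (j + r - 1)"
  have m1: "m = k - (j + r - 1) - 1" using assms unfolding m_def by simp
  have e: "E k n (j + r - 1) = fact (a + 1 + m) / fact (a + 1) * ((-1)^m * ui (int m))"
    by (rule E_closed[OF m1]) (simp add: a_def)
  have n1: "a + 1 + m = n" and n2: "a + 1 = n - k + j + r" using assms unfolding a_def m_def by auto
  show ?thesis
  proof (cases "odd m")
    case True
    then have "ui (int m) = 0" unfolding ui_def by simp
    then show ?thesis using e True unfolding m_def by simp
  next
    case False
    then obtain q where q: "m = 2 * q" by auto
    have u: "ui (int m) = 1 / (fact q * 4^q)" unfolding ui_def q nat_int by simp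
    have p: "(2::real)^m = 4^q" unfolding q by (simp add: power_mult)
    have s: "(-1::real)^m = 1" unfolding q by simp
    have "E k n (j + r - 1) = fact n / (fact (n - k + j + r) * fact q * 4^q)"
      unfolding e n1 unfolding n2 u s by (simp add: mult.assoc)
    then show ?thesis using False q p unfolding m_def[symmetric] by simp
  qed
qed

end
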